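(* Let $\mathcal{P}^{\uparrow}_+$ be the proper orthochronous Poincaré group on $\mathbb{R}^4$, i.e. the group of maps $x\mapsto Lx+b$ with $b\in\mathbb{R}^4$ and $L$ in the proper orthochronous Lorentz group of the form $g=\mathrm{diag}(1,1,1,-c^2)$. Then every $\mathcal{P}^{\uparrow}_+$-invariant equivalence relation on $\mathbb{R}^4$ is trivial, i.e. it is either the total relation $\mathbb{R}^4\times\mathbb{R}^4$ or the identity relation.
   Context: An equivalence relation $\sim$ is $\mathcal{P}^{\uparrow}_+$-invariant if $x\sim y$ implies $h(x)\sim h(y)$ for all $x,y\in\mathbb{R}^4$ and all $h\in\mathcal{P}^{\uparrow}_+$. *)

theory Defs
  imports "HOL-Analysis.Analysis"
begin

text \<open>Coordinates of R^4 are indexed by the type 4 = {0,1,2,3}; index 3 is the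
  time coordinate (the fourth one), matching g = diag(1,1,1,-c^2).\<close>

definition minkowski_metric :: "real \<Rightarrow> real^4^4" where
  "minkowski_metric c = (\<chi> i j. if i = j then (if i = (3::4) then - (c^2) else 1) else 0)"

definition lorentz_group :: "real \<Rightarrow> (real^4^4) set" where
  "lorentz_group c = {L. transpose L ** minkowski_metric c ** L = minkowski_metric c}"

definition proper_orthochronous_lorentz :: "real \<Rightarrow> (real^4^4) set" where
  "proper_orthochronous_lorentz c =
     {L \<in> lorentz_group c. det L = 1 \<and> L $ 3 $ 3 > 0}"

definition proper_orthochronous_poincare :: "real \<Rightarrow> (real^4 \<Rightarrow> real^4) set" where
  "proper_orthochronous_poincare c =
     {(\<lambda>x. L *v x + b) | L b. L \<in> proper_orthochronous_lorentz c}"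

definition poincare_invariant :: "real \<Rightarrow> ((real^4) \<times> (real^4)) set \<Rightarrow> bool" where
  "poincare_invariant c R \<longleftrightarrow>
     (\<forall>x y h. (x, y) \<in> R \<longrightarrow> h \<in> proper_orthochronous_poincare c \<longrightarrow> (h x, h y) \<in> R)"

end

theory Submission
  imports Defs
begin

definition boost :: "real \<Rightarrow> 4 \<Rightarrow> real \<Rightarrow> real^4^4" where
  "boost c a p = (\<chi> i j. if i = j then (if i = a \<or> i = 3 then cosh p else 1)
     else if i = a \<and> j = 3 then c * sinh p else if i = 3 \<and> j = a then sinh p / c else 0)"

lemma boost_lor:
  assumes "c > 0" "a \<in> {1,2,4}"
  shows "boost c a p \<in> lorentz_group c"
proof -
  have h: "(cosh p)^2 = (sinh p)^2 + 1" by (rule cosh_square_eq)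
  show ?thesis using assms h unfolding lorentz_group_def
    by (auto simp: vec_eq_iff forall_4 sum_4 matrix_matrix_mult_def transpose_def
        minkowski_metric_def boost_def field_simps power2_eq_square)
qed

lemma boost_mul:
  assumes "c > 0" "a \<in> {1,2,4}"
  shows "boost c a (p/2) ** boost c a (p/2) = boost c a p"
proof -
  have h1: "sinh p = 2 * sinh (p/2) * cosh (p/2)" using sinh_double[of "p/2"] by simp
  have h2: "cosh p = (cosh (p/2))^2 + (sinh (p/2))^2" using cosh_double[of "p/2"] by simp
  show ?thesis using assms h1 h2
    by (auto simp: vec_eq_iff forall_4 sum_4 matrix_matrix_mult_def
        boost_def field_simps power2_eq_square)
qed

lemma prod_4: "prod f (UNIV::4 set) = f 1 * f 2 * f 3 * f 4"
  unfolding UNIV_4 by (simp add: ac_simps)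

lemma det_metric: "c > 0 \<Longrightarrow> det (minkowski_metric c) \<noteq> 0"
  unfolding minkowski_metric_def
  by (subst det_diagonal) (simp_all add: prod_4)

lemma lor_det:
  assumes "c > 0" "L \<in> lorentz_group c"
  shows "det L * det L = 1"
proof -
  have "det (transpose L ** minkowski_metric c ** L) = det (minkowski_metric c)"
    using assms(2) by (simp add: lorentz_group_def)
  then have "det L * det (minkowski_metric c) * det L = det (minkowski_metric c)"
    by (simp add: det_mul det_transpose)
  then have "(det L * det L - 1) * det (minkowski_metric c) = 0"
    by (simp add: algebra_simps)
  then show ?thesis using det_metric[OF assms(1)] by simp
qed

lemma lor_mul:
  assumes "L \<in> lorentz_group c" "M \<in> lorentz_group c"
  shows "L ** M \<in> lorentz_group c"
proof -
  have "transpose (L ** M) ** minkowski_metric c ** (L ** M)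
     = transpose M ** (transpose L ** minkowski_metric c ** L) ** M"
    by (simp add: matrix_transpose_mul matrix_mul_assoc)
  then show ?thesis using assms by (simp add: lorentz_group_def)
qed

lemma boost_in:
  assumes "c > 0" "a \<in> {1,2,4}"
  shows "boost c a p \<in> proper_orthochronous_lorentz c"
proof -
  have l: "boost c a (p/2) \<in> lorentz_group c" by (rule boost_lor[OF assms])
  have "det (boost c a p) = det (boost c a (p/2) ** boost c a (p/2))"
    by (simp only: boost_mul[OF assms])
  then have "det (boost c a p) = 1"
    using lor_det[OF assms(1) l] by (simp only: det_mul)
  moreover have "boost c a p $ 3 $ 3 = cosh p"
    by (simp add: boost_def)
  moreover have "cosh p > 0" by simp
  ultimately show ?thesis using boost_lor[OF assms]
    by (simp add: proper_orthochronous_lorentz_def)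
qed

definition dg :: "(4 \<Rightarrow> real) \<Rightarrow> real^4^4" where
  "dg d = (\<chi> i j. if i = j then d i else 0)"

lemma ifz1: "(if P then a else 0) * (b::real) = (if P then a * b else 0)" by simp
lemma ifz2: "(b::real) * (if P then a else 0) = (if P then b * a else 0)" by simp

lemma dg_left: "dg d ** A = (\<chi> i j. d i * A$i$j)"
  by (simp add: dg_def matrix_matrix_mult_def vec_eq_iff ifz1 sum.delta)

lemma dg_right: "A ** dg d = (\<chi> i j. A$i$j * d j)"
  by (simp add: dg_def matrix_matrix_mult_def vec_eq_iff ifz2 sum.delta')

lemma dg_transpose: "transpose (dg d) = dg d"
  by (simp add: dg_def transpose_def vec_eq_iff)

lemma dg_in:
  assumes "\<And>i. d i = 1 \<or> d i = -1" "d 3 = 1" "d 1 * d 2 * d 4 = 1"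
  shows "dg d \<in> proper_orthochronous_lorentz c"
proof -
  have sq: "\<And>i. d i * d i = 1" using assms(1) by (metis mult_minus_left mult_1 minus_minus)
  have "transpose (dg d) ** minkowski_metric c ** dg d = minkowski_metric c"
    unfolding dg_transpose dg_left dg_right
    by (simp add: vec_eq_iff minkowski_metric_def) (metis sq mult.commute mult.assoc mult_1)
  then have "dg d \<in> lorentz_group c" unfolding lorentz_group_def by simp
  moreover have "det (dg d) = 1"
    unfolding dg_def by (subst det_diagonal) (simp_all add: prod_4 assms(2,3))
  moreover have "dg d $ 3 $ 3 > 0" by (simp add: dg_def assms)
  ultimately show ?thesis by (simp add: proper_orthochronous_lorentz_def)
qed

lemma dg_mult: "dg d *v x = (\<chi> i. d i * x $ i)"
  by (simp add: dg_def matrix_vector_mult_def vec_eq_iff ifz1 sum.delta)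

lemma mv_axis: "((A::real^4^4) *v axis j k) $ i = A$i$j * k"
  by (simp add: matrix_vector_mult_def axis_def ifz2 sum.delta')

lemma boost_axis_a:
  assumes "a \<in> {1,2,4}"
  shows "boost c a p *v axis a k = axis a (k * cosh p) + axis 3 (k * sinh p / c)"
proof -
  have "a \<noteq> 3" using assms by auto
  then show ?thesis unfolding vec_eq_iff mv_axis by (auto simp: boost_def axis_def)
qed

lemma boost_axis_3:
  assumes "a \<in> {1,2,4}"
  shows "boost c a p *v axis 3 k = axis a (k * c * sinh p) + axis 3 (k * cosh p)"
proof -
  have "a \<noteq> 3" using assms by auto
  then show ?thesis unfolding vec_eq_iff mv_axis by (auto simp: boost_def axis_def)
qed

lemma mat1_in: "mat 1 \<in> proper_orthochronous_lorentz c"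
  by (simp add: proper_orthochronous_lorentz_def lorentz_group_def transpose_mat det_I)
     (simp add: mat_def)

theorem corollary3p9:
  fixes c :: real and R :: "((real^4) \<times> (real^4)) set"
  assumes "c > 0"
    and "equiv UNIV R"
    and "poincare_invariant c R"
  shows "R = UNIV \<or> R = Id"
proof -
  have refl: "\<And>x. (x,x) \<in> R" and sym: "\<And>x y. (x,y) \<in> R \<Longrightarrow> (y,x) \<in> R"
    and tr: "\<And>x y z. (x,y) \<in> R \<Longrightarrow> (y,z) \<in> R \<Longrightarrow> (x,z) \<in> R"
    using assms(2) unfolding equiv_def refl_on_def sym_def trans_def by blast+
  have inv: "\<And>x y L b. (x,y) \<in> R \<Longrightarrow> L \<in> proper_orthochronous_lorentz c
      \<Longrightarrow> (L *v x + b, L *v y + b) \<in> R"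
  proof -
    fix x y L b assume "(x,y) \<in> R" "L \<in> proper_orthochronous_lorentz c"
    moreover have "(\<lambda>x. L *v x + b) \<in> proper_orthochronous_poincare c"
      using calculation(2) unfolding proper_orthochronous_poincare_def by blast
    ultimately show "(L *v x + b, L *v y + b) \<in> R"
      using assms(3) unfolding poincare_invariant_def by blast
  qed
  have transl: "\<And>x y b. (x,y) \<in> R \<Longrightarrow> (x + b, y + b) \<in> R"
    using inv[OF _ mat1_in] by simp
  define S where "S = {w. (0,w) \<in> R}"
  have SA: "\<And>u w. u \<in> S \<Longrightarrow> w \<in> S \<Longrightarrow> u + w \<in> S"
  proof -
    fix u w assume "u \<in> S" "w \<in> S"
    then have "(0,u) \<in> R" "(0 + u, w + u) \<in> R" using transl[of 0 w u] unfolding S_def by auto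
    then show "u + w \<in> S" unfolding S_def using tr by (simp add: add.commute)
  qed
  have SN: "\<And>w. w \<in> S \<Longrightarrow> - w \<in> S"
  proof -
    fix w assume "w \<in> S"
    then have "(0 + - w, w + - w) \<in> R" using transl unfolding S_def by blast
    then show "- w \<in> S" unfolding S_def using sym by simp
  qed
  have SD: "\<And>u w. u \<in> S \<Longrightarrow> w \<in> S \<Longrightarrow> u - w \<in> S"
    using SA SN by (metis diff_conv_add_uminus)
  have SL: "\<And>w L. w \<in> S \<Longrightarrow> L \<in> proper_orthochronous_lorentz c \<Longrightarrow> L *v w \<in> S"
    using inv[where b=0] unfolding S_def by (metis add_0_right matrix_vector_mult_0_right mem_Collect_eq)
  show ?thesis
  proof (cases "R = Id")
    case True then show ?thesis by simp
  next
    case False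
    then obtain x y where xy: "(x,y) \<in> R" "x \<noteq> y" using refl by auto
    define v where "v = y - x"
    have vS: "v \<in> S" using transl[OF xy(1), of "-x"] unfolding S_def v_def by simp
    have "v \<noteq> 0" using xy(2) unfolding v_def by simp
    then obtain i where vi: "v $ i \<noteq> 0" by (auto simp: vec_eq_iff)
    define D12 where "D12 = dg (\<lambda>j. if j = 1 \<or> j = 2 then -1 else 1)"
    define D14 where "D14 = dg (\<lambda>j. if j = 1 \<or> j = 4 then -1 else 1)"
    define D24 where "D24 = dg (\<lambda>j. if j = 2 \<or> j = 4 then -1 else 1)"
    have D: "D12 \<in> proper_orthochronous_lorentz c" "D14 \<in> proper_orthochronous_lorentz c"
        "D24 \<in> proper_orthochronous_lorentz c"
      unfolding D12_def D14_def D24_def by (rule dg_in; simp)+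
    have u: "D12 *v v \<in> S" "D14 *v v \<in> S" "D24 *v v \<in> S" using SL[OF vS] D by auto
    have c1: "v + D24 *v v - D12 *v v - D14 *v v \<in> S" using SA SD vS u by metis
    have c2: "v + D14 *v v - D12 *v v - D24 *v v \<in> S" using SA SD vS u by metis
    have c4: "v + D12 *v v - D14 *v v - D24 *v v \<in> S" using SA SD vS u by metis
    have c3: "v + D12 *v v + D14 *v v + D24 *v v \<in> S" using SA SD vS u by metis
    have ax: "axis i (4 * v $ i) \<in> S"
    proof -
      have "i = 1 \<or> i = 2 \<or> i = 3 \<or> i = 4" using exhaust_4 by blast
      then show ?thesis
      proof (elim disjE)
        assume i: "i = 1"
        have "v + D24 *v v - D12 *v v - D14 *v v = axis i (4 * v $ i)" unfolding i
          by (simp add: D12_def D14_def D24_def dg_mult vec_eq_iff forall_4 axis_def)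
        then show ?thesis using c1 by simp
      next
        assume i: "i = 2"
        have "v + D14 *v v - D12 *v v - D24 *v v = axis i (4 * v $ i)" unfolding i
          by (simp add: D12_def D14_def D24_def dg_mult vec_eq_iff forall_4 axis_def)
        then show ?thesis using c2 by simp
      next
        assume i: "i = 3"
        have "v + D12 *v v + D14 *v v + D24 *v v = axis i (4 * v $ i)" unfolding i
          by (simp add: D12_def D14_def D24_def dg_mult vec_eq_iff forall_4 axis_def)
        then show ?thesis using c3 by simp
      next
        assume i: "i = 4"
        have "v + D12 *v v - D14 *v v - D24 *v v = axis i (4 * v $ i)" unfolding i
          by (simp add: D12_def D14_def D24_def dg_mult vec_eq_iff forall_4 axis_def)
        then show ?thesis using c4 by simp
      qed
    qed
    have step2: "\<And>(a::4) (k::real) t. a \<in> {1,2,4} \<Longrightarrow> k \<noteq> 0 \<Longrightarrow> axis a k \<in> S \<Longrightarrow> axis 3 t \<in> S"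
    proof -
      fix a :: 4 and k t :: real assume a: "a \<in> {1,2,4}" and k: "k \<noteq> 0" and akS: "axis a k \<in> S"
      define p where "p = arsinh (t * c / (2 * k))"
      have sp: "sinh p = t * c / (2 * k)" unfolding p_def by simp
      have "boost c a p *v axis a k - boost c a (-p) *v axis a k \<in> S"
        using SD SL boost_in[OF assms(1) a] akS by blast
      also have "boost c a p *v axis a k - boost c a (-p) *v axis a k = axis 3 (2 * k * sinh p / c)"
        unfolding boost_axis_a[OF a] by (simp add: vec_eq_iff axis_def)
      also have "2 * k * sinh p / c = t" using sp k assms(1) by (simp add: field_simps)
      finally show "axis 3 t \<in> S" .
    qed
    have step3: "\<And>(a::4) (k::real) t. a \<in> {1,2,4} \<Longrightarrow> k \<noteq> 0 \<Longrightarrow> axis 3 k \<in> S \<Longrightarrow> axis a t \<in> S"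
    proof -
      fix a :: 4 and k t :: real assume a: "a \<in> {1,2,4}" and k: "k \<noteq> 0" and akS: "axis 3 k \<in> S"
      define p where "p = arsinh (t / (2 * k * c))"
      have sp: "sinh p = t / (2 * k * c)" unfolding p_def by simp
      have "boost c a p *v axis 3 k - boost c a (-p) *v axis 3 k \<in> S"
        using SD SL boost_in[OF assms(1) a] akS by blast
      also have "boost c a p *v axis 3 k - boost c a (-p) *v axis 3 k = axis a (2 * k * c * sinh p)"
        unfolding boost_axis_3[OF a] by (simp add: vec_eq_iff axis_def)
      also have "2 * k * c * sinh p = t" using sp k assms(1) by (simp add: field_simps)
      finally show "axis a t \<in> S" .
    qed
    have k0: "4 * v $ i \<noteq> 0" using vi by simp
    have all3: "\<And>t. axis 3 t \<in> S"
    proof -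
      fix t
      have "i = 3 \<or> i \<in> {1,2,4}" using exhaust_4[of i] by blast
      then show "axis 3 t \<in> S"
      proof
        assume "i = 3"
        then have "axis 1 1 \<in> S" using step3[of 1 "4 * v $ i" 1] ax k0 by simp
        then show ?thesis using step2[of 1 1 t] by simp
      next
        assume "i \<in> {1,2,4}" then show ?thesis using step2[OF _ k0 ax] by blast
      qed
    qed
    have allS: "\<And>(a::4) t. a \<in> {1,2,4} \<Longrightarrow> axis a t \<in> S"
      using step3[of _ 1] all3 by simp
    have everything: "\<And>w. w \<in> S"
    proof -
      fix w :: "real^4"
      have "w = axis 1 (w$1) + axis 2 (w$2) + axis 3 (w$3) + axis 4 (w$4)"
        by (simp add: vec_eq_iff forall_4 axis_def)
      then show "w \<in> S" using SA allS all3 by (metis insert_iff)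
    qed
    have "R = UNIV"
    proof (rule set_eqI, clarsimp)
      fix a b :: "real^4"
      have "(0 + a, (b - a) + a) \<in> R" using transl everything unfolding S_def by blast
      then show "(a, b) \<in> R" by simp
    qed
    then show ?thesis by simp
  qed
qed

end
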